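(* Let $\mu>0$, $\beta\in[0,1]$, $x_0\in\mathbb R^n$, and $f\in\mathcal S^2_{\mu,L}(\mathbb R^n)$ for some $L\ge\mu$. For $s>0$ let $X_s$ be the solution of the $\beta$-High Resolution ODE $$\ddot X_s+2\sqrt\mu\,\dot X_s+\beta\sqrt s\,\nabla^2 f(X_s)\dot X_s+(1+\sqrt{\mu s})\nabla f(X_s)=0,\quad X_s(0)=x_0,\ \dot X_s(0)=-\frac{2\sqrt s\,\nabla f(x_0)}{1+\sqrt{\mu s}},$$ and let $X$ be the solution of the low-resolution ODE $$\ddot X+2\sqrt\mu\,\dot X+\nabla f(X)=0,\quad X(0)=x_0,\ \dot X(0)=0.$$ Then for every $T>0$, $$\lim_{s\to 0}\max_{0\le t\le T}\|X_s(t)-X(t)\|=0.$$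
   Context: $\mathcal S^2_{\mu,L}(\mathbb R^n)$ is the class of twice differentiable, $\mu$-strongly convex functions $f:\mathbb R^n\to\mathbb R$ (i.e. $f(y)\ge f(x)+\langle\nabla f(x),y-x\rangle+\frac\mu2\|y-x\|^2$) whose gradient is $L$-Lipschitz and whose Hessian is Lipschitz in Frobenius norm ($\|\nabla^2f(x)-\nabla^2f(y)\|_F\le L'\|x-y\|$ for some $L'>0$), with $0<\mu\le L$. *)

theory Defs
  imports "HOL-Analysis.Analysis"
begin

text \<open>Points of R^n are vectors real^'n. The gradient of f is G, the Hessian is the
  matrix-valued function H (norm on real^'n^'n is the Frobenius norm).\<close>

definition is_gradient :: "(real^'n \<Rightarrow> real) \<Rightarrow> (real^'n \<Rightarrow> real^'n) \<Rightarrow> bool" where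
  "is_gradient f G \<longleftrightarrow> (\<forall>x. (f has_derivative (\<lambda>h. G x \<bullet> h)) (at x))"

definition is_hessian :: "(real^'n \<Rightarrow> real^'n) \<Rightarrow> (real^'n \<Rightarrow> real^'n^'n) \<Rightarrow> bool" where
  "is_hessian G H \<longleftrightarrow> (\<forall>x. (G has_derivative (\<lambda>h. H x *v h)) (at x))"

definition S2_class :: "real \<Rightarrow> real \<Rightarrow> (real^'n \<Rightarrow> real) \<Rightarrow> (real^'n \<Rightarrow> real^'n)
    \<Rightarrow> (real^'n \<Rightarrow> real^'n^'n) \<Rightarrow> bool" where
  "S2_class \<mu> L f G H \<longleftrightarrow>
     0 < \<mu> \<and> \<mu> \<le> L \<and> is_gradient f G \<and> is_hessian G H \<and>
     (\<forall>x y. f y \<ge> f x + G x \<bullet> (y - x) + \<mu> / 2 * (norm (y - x))\<^sup>2) \<and>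
     (\<forall>x y. norm (G x - G y) \<le> L * norm (x - y)) \<and>
     (\<exists>L'>0. \<forall>x y. norm (H x - H y) \<le> L' * norm (x - y))"

end

theory Submission
  imports Defs
begin

lemma gronwall_strict:
  fixes Z Z' :: "real \<Rightarrow> 'a::real_normed_vector"
  assumes C: "C > 0" and k: "k \<ge> 0"
    and deriv: "\<And>t. 0 \<le> t \<Longrightarrow> t \<le> T \<Longrightarrow> (Z has_vector_derivative Z' t) (at t within {0..})"
    and bnd: "\<And>t. 0 \<le> t \<Longrightarrow> t \<le> T \<Longrightarrow> norm (Z' t) \<le> C * norm (Z t) + k"
    and a: "norm (Z 0) < a"
    and t: "0 \<le> t" "t \<le> T"
  shows "norm (Z t) < (a + k/C) * exp (C*t) - k/C"
proof (rule ccontr)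
  define \<phi> where "\<phi> = (\<lambda>t. (a + k/C) * exp (C*t) - k/C)"
  assume "\<not> ?thesis"
  hence tS: "\<phi> t \<le> norm (Z t)" by (simp add: \<phi>_def)
  define S where "S = {x \<in> {0..T}. \<phi> x \<le> norm (Z x)}"
  have contZ: "continuous_on {0..T} Z"
    unfolding continuous_on_eq_continuous_within
  proof
    fix x assume "x \<in> {0..T}"
    hence "continuous (at x within {0..}) Z"
      using deriv[of x] \<open>x \<in> {0..T}\<close> by (intro has_vector_derivative_continuous) auto
    thus "continuous (at x within {0..T}) Z"
      by (rule continuous_within_subset) auto
  qed
  have contphi: "continuous_on UNIV \<phi>" unfolding \<phi>_def
    by (intro continuous_intros)
  have phider: "(\<phi> has_vector_derivative C * \<phi> x + k) (at x)" for x
    unfolding \<phi>_def has_real_derivative_iff_has_vector_derivative[symmetric]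
    using C by (auto intro!: derivative_eq_intros simp: field_simps)
  have "closed S" unfolding S_def
    by (intro continuous_on_closed_Collect_le continuous_on_subset[OF contphi]
         continuous_on_norm contZ) auto
  moreover have "S \<noteq> {}" using tS t S_def by auto
  moreover have "bdd_below S" unfolding S_def by (rule bdd_belowI[of _ 0]) auto
  ultimately have IS: "Inf S \<in> S" by (intro closed_contains_Inf)
  define u where "u = Inf S"
  have u0: "0 \<le> u" "u \<le> T" and uS: "\<phi> u \<le> norm (Z u)" using IS u_def S_def by auto
  have below: "norm (Z x) < \<phi> x" if "0 \<le> x" "x < u" for x
  proof (rule ccontr)
    assume "\<not> ?thesis"
    hence "x \<in> S" using that u0 S_def by auto
    hence "u \<le> x" unfolding u_def using \<open>bdd_below S\<close> by (rule cInf_lower)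
    thus False using that by simp
  qed
  have phi0: "\<phi> 0 = a" by (simp add: \<phi>_def)
  have "u \<noteq> 0" using uS a phi0 by auto
  hence upos: "0 < u" using u0 by simp
  have "norm (Z u - Z 0) \<le> \<phi> u - \<phi> 0"
  proof (rule differentiable_bound_general[OF upos, where f' = Z' and \<phi>' = "\<lambda>x. C * \<phi> x + k"])
    show "continuous_on {0..u} Z" using u0 by (intro continuous_on_subset[OF contZ]) auto
    show "continuous_on {0..u} \<phi>" by (intro continuous_on_subset[OF contphi]) auto
    fix x assume x: "0 < x" "x < u"
    have "(Z has_vector_derivative Z' x) (at x within {0<..})"
      using deriv[of x] x u0 by (auto intro: has_vector_derivative_within_subset)
    thus "(Z has_vector_derivative Z' x) (at x)"
      using has_vector_derivative_within_open[of x "{0<..}"] x by auto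
    show "(\<phi> has_vector_derivative C * \<phi> x + k) (at x)" by (rule phider)
    have "norm (Z' x) \<le> C * norm (Z x) + k" using bnd x u0 by auto
    also have "\<dots> \<le> C * \<phi> x + k" using below[of x] x C by auto
    finally show "norm (Z' x) \<le> C * \<phi> x + k" .
  qed
  hence "norm (Z u) - norm (Z 0) \<le> \<phi> u - a" using phi0 norm_triangle_ineq2[of "Z u" "Z 0"] by linarith
  thus False using uS a by linarith
qed



lemma deriv_lipschitz_bound:
  fixes G :: "'a::real_normed_vector \<Rightarrow> 'b::real_normed_vector"
  assumes der: "(G has_derivative D) (at x)"
    and lip: "\<And>x y. norm (G x - G y) \<le> L * norm (x - y)"
  shows "norm (D v) \<le> L * norm v"
proof (cases "v = 0")
  case True
  have "linear D" using der has_derivative_linear by blast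
  then show ?thesis using True linear_0 by fastforce
next
  case False
  hence nv: "norm v > 0" by simp
  have lin: "linear D" using der has_derivative_linear by blast
  show ?thesis
  proof (rule field_le_epsilon)
    fix e :: real assume e: "e > 0"
    obtain d where d: "d > 0" and dd: "\<And>y. norm (y - x) < d \<Longrightarrow>
        norm (G y - G x - D (y - x)) \<le> (e / norm v) * norm (y - x)"
      using der[unfolded has_derivative_at_alt] e nv by (meson divide_pos_pos)
    define c where "c = d / (2 * norm v)"
    have c: "c > 0" using d nv by (simp add: c_def)
    have "norm ((x + c *\<^sub>R v) - x) = c * norm v" using c by simp
    also have "\<dots> < d" using d nv by (simp add: c_def)
    finally have "norm (G (x + c *\<^sub>R v) - G x - D (c *\<^sub>R v)) \<le> (e / norm v) * (c * norm v)"
      using dd[of "x + c *\<^sub>R v"] c by simp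
    hence h1: "norm (G (x + c *\<^sub>R v) - G x - c *\<^sub>R D v) \<le> e * c"
      using lin nv by (simp add: linear_scale)
    have h2: "norm (G (x + c *\<^sub>R v) - G x) \<le> L * (c * norm v)"
      using lip[of "x + c *\<^sub>R v" x] c by simp
    have "c * norm (D v) = norm (c *\<^sub>R D v)" using c by simp
    also have "\<dots> \<le> norm (G (x + c *\<^sub>R v) - G x) + norm (G (x + c *\<^sub>R v) - G x - c *\<^sub>R D v)"
      using norm_triangle_ineq4[of "G (x + c *\<^sub>R v) - G x" "G (x + c *\<^sub>R v) - G x - c *\<^sub>R D v"] by simp
    also have "\<dots> \<le> c * (L * norm v + e)" using h1 h2 by (simp add: algebra_simps)
    finally show "norm (D v) \<le> L * norm v + e" using c by simp
  qed
qed

theorem lemma3p4: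
  fixes \<mu> L \<beta> :: real
    and f :: "real^'n \<Rightarrow> real" and G :: "real^'n \<Rightarrow> real^'n" and H :: "real^'n \<Rightarrow> real^'n^'n"
    and x0 :: "real^'n"
    and X V A :: "real \<Rightarrow> real \<Rightarrow> real^'n"
    and Y W B :: "real \<Rightarrow> real^'n"
  assumes "\<mu> > 0" "0 \<le> \<beta>" "\<beta> \<le> 1" "L \<ge> \<mu>"
    and "S2_class \<mu> L f G H"
    and HR_pos: "\<And>s t. s > 0 \<Longrightarrow> t \<ge> 0 \<Longrightarrow>
           (X s has_vector_derivative V s t) (at t within {0..}) \<and>
           (V s has_vector_derivative A s t) (at t within {0..}) \<and>
           A s t + (2 * sqrt \<mu>) *\<^sub>R V s t + (\<beta> * sqrt s) *\<^sub>R (H (X s t) *v V s t)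
             + (1 + sqrt (\<mu> * s)) *\<^sub>R G (X s t) = 0"
    and HR_init: "\<And>s. s > 0 \<Longrightarrow> X s 0 = x0 \<and>
           V s 0 = - ((2 * sqrt s) / (1 + sqrt (\<mu> * s))) *\<^sub>R G x0"
    and LR: "\<And>t. t \<ge> 0 \<Longrightarrow>
           (Y has_vector_derivative W t) (at t within {0..}) \<and>
           (W has_vector_derivative B t) (at t within {0..}) \<and>
           B t + (2 * sqrt \<mu>) *\<^sub>R W t + G (Y t) = 0"
    and LR_init: "Y 0 = x0" "W 0 = 0"
    and "T > 0"
  shows "((\<lambda>s. SUP t\<in>{0..T}. norm (X s t - Y t)) \<longlongrightarrow> 0) (at_right 0)"
proof -
  have mu: "\<mu> > 0" using assms by simp
  have Lpos: "L > 0" using assms by simp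
  have lipG: "\<And>x y. norm (G x - G y) \<le> L * norm (x - y)"
    using assms(5) unfolding S2_class_def by blast
  have hessH: "is_hessian G H" using assms(5) unfolding S2_class_def by blast
  have hb: "norm (H x *v v) \<le> L * norm v" for x v
    using hessH unfolding is_hessian_def
    by (intro deriv_lipschitz_bound[where G=G and D="\<lambda>h. H x *v h" and x=x, OF _ lipG]) auto
  define sm where "sm = sqrt \<mu>"
  have sm: "sm > 0" using mu by (simp add: sm_def)
  define g0 where "g0 = norm (G x0)"
  have g0: "g0 \<ge> 0" by (simp add: g0_def)
  have GX: "norm (G x) \<le> g0 + L * norm (x - x0)" for x
    using lipG[of x x0] norm_triangle_ineq2[of "G x" "G x0"] unfolding g0_def by linarith
  define C1 where "C1 = 1 + 2 * sm + L + (1+sm) * L"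
  define k1 where "k1 = (1+sm) * g0"
  define a1 where "a1 = 2 * g0 + 1"
  define M where "M = (a1 + k1/C1) * exp (C1 * T)"
  have C1: "C1 > 0" using sm Lpos by (simp add: C1_def add_pos_nonneg)
  have k1: "k1 \<ge> 0" using sm g0 by (simp add: k1_def)
  have V0: "norm (V s 0) \<le> 2 * sqrt s * g0" if "s > 0" for s
  proof -
    have d: "1 \<le> 1 + sqrt (\<mu> * s)" using mu that by simp
    have "norm (V s 0) = (2 * sqrt s) / (1 + sqrt (\<mu> * s)) * g0"
      using HR_init[OF that] mu that by (simp add: g0_def)
    also have "\<dots> \<le> 2 * sqrt s * g0"
    proof (intro mult_right_mono g0)
      have "(2 * sqrt s) / (1 + sqrt (\<mu> * s)) \<le> (2 * sqrt s) / 1"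
        using d that by (intro divide_left_mono) (auto intro: add_pos_nonneg)
      thus "(2 * sqrt s) / (1 + sqrt (\<mu> * s)) \<le> 2 * sqrt s" by simp
    qed
    finally show ?thesis .
  qed
  have sqs: "sqrt (\<mu> * s) = sm * sqrt s" for s by (simp add: sm_def real_sqrt_mult)
  have bndX: "norm (X s t - x0) \<le> M \<and> norm (V s t) \<le> M"
    if s: "0 < s" "s < 1" and t: "0 \<le> t" "t \<le> T" for s t
  proof -
    have ss: "sqrt s \<le> 1" "sqrt s \<ge> 0" using s by auto
    have "norm ((\<lambda>t. (X s t - x0, V s t)) t) < (a1 + k1/C1) * exp (C1 * t) - k1/C1"
    proof (rule gronwall_strict[OF C1 k1, where T=T and Z'="\<lambda>t. (V s t, A s t)"])
      fix t :: real assume t: "0 \<le> t" "t \<le> T"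
      show "((\<lambda>t. (X s t - x0, V s t)) has_vector_derivative (V s t, A s t)) (at t within {0..})"
        using HR_pos[OF s(1) t(1)] by (auto intro!: derivative_eq_intros)
      have eq: "A s t = - ((2 * sm) *\<^sub>R V s t + (\<beta> * sqrt s) *\<^sub>R (H (X s t) *v V s t)
             + (1 + sm * sqrt s) *\<^sub>R G (X s t))"
      proof -
        have h: "A s t + ((2 * sm) *\<^sub>R V s t + (\<beta> * sqrt s) *\<^sub>R (H (X s t) *v V s t)
             + (1 + sm * sqrt s) *\<^sub>R G (X s t)) = 0"
          using HR_pos[OF s(1) t(1)] sqs[of s] unfolding sm_def by (simp add: add.assoc)
        show ?thesis using h by (metis add_diff_cancel_right' diff_0)
      qed
      have n1: "norm ((\<beta> * sqrt s) *\<^sub>R (H (X s t) *v V s t)) \<le> L * norm (V s t)"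
      proof -
        have "norm ((\<beta> * sqrt s) *\<^sub>R (H (X s t) *v V s t)) = (\<beta> * sqrt s) * norm (H (X s t) *v V s t)"
          using assms(2) ss by simp
        also have "\<dots> \<le> 1 * norm (H (X s t) *v V s t)"
          using assms(2,3) ss by (intro mult_right_mono) (auto simp: mult_le_one)
        finally show ?thesis using hb[of "X s t" "V s t"] by simp
      qed
      have n2: "norm ((1 + sm * sqrt s) *\<^sub>R G (X s t)) \<le> (1 + sm) * (g0 + L * norm (X s t - x0))"
      proof -
        have "norm ((1 + sm * sqrt s) *\<^sub>R G (X s t)) = (1 + sm * sqrt s) * norm (G (X s t))"
          using sm ss by simp
        also have "\<dots> \<le> (1 + sm) * (g0 + L * norm (X s t - x0))"
          using sm ss GX[of "X s t"] by (intro mult_mono) (auto simp: mult_left_le)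
        finally show ?thesis .
      qed
      have n0: "norm ((2 * sm) *\<^sub>R V s t) = 2 * sm * norm (V s t)" using sm by simp
      have nA: "norm (A s t) \<le> 2 * sm * norm (V s t) + L * norm (V s t) + (1 + sm) * (g0 + L * norm (X s t - x0))"
        unfolding eq norm_minus_cancel using n0 n1 n2 norm_triangle_ineq[of "(2 * sm) *\<^sub>R V s t + (\<beta> * sqrt s) *\<^sub>R (H (X s t) *v V s t)" "(1 + sm * sqrt s) *\<^sub>R G (X s t)"]
          norm_triangle_ineq[of "(2 * sm) *\<^sub>R V s t" "(\<beta> * sqrt s) *\<^sub>R (H (X s t) *v V s t)"] by linarith
      define z where "z = norm (X s t - x0, V s t)"
      have z1: "norm (X s t - x0) \<le> z" "norm (V s t) \<le> z" unfolding z_def by (rule norm_fst_le, rule norm_snd_le)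
      have "norm (V s t, A s t) \<le> norm (V s t) + norm (A s t)" by (rule norm_Pair_le)
      also have "\<dots> \<le> z + (2 * sm * z + L * z + (1 + sm) * (g0 + L * z))"
        using nA z1 sm Lpos by (intro add_mono order_trans[OF nA] add_mono mult_left_mono mult_right_mono) auto
      also have "\<dots> = C1 * z + k1" by (simp add: C1_def k1_def algebra_simps)
      finally show "norm (V s t, A s t) \<le> C1 * norm (X s t - x0, V s t) + k1" unfolding z_def .
    next
      have "norm ((\<lambda>t. (X s t - x0, V s t)) 0) = norm (V s 0)" using HR_init[OF s(1)] by (simp add: norm_Pair)
      also have "\<dots> \<le> 2 * sqrt s * g0" by (rule V0[OF s(1)])
      also have "\<dots> \<le> 2 * g0" using ss g0 by (simp add: mult_left_le_one_le)
      finally show "norm ((\<lambda>t. (X s t - x0, V s t)) 0) < a1" by (simp add: a1_def)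
    qed (use t in auto)
    also have "\<dots> \<le> M" unfolding M_def using C1 k1 t a1_def g0
      by (smt (verit) divide_nonneg_pos exp_ge_zero exp_le_cancel_iff mult_left_mono mult_le_cancel_left_pos)
    finally have "norm (X s t - x0, V s t) < M" by simp
    thus ?thesis using norm_fst_le[of "X s t - x0" "V s t"] norm_snd_le[of "V s t" "X s t - x0"] by linarith
  qed
  define C2 where "C2 = 1 + 2 * sm + L"
  define K where "K = L * M + sm * (g0 + L * M)"
  define D where "D = (2 * g0 + 1 + K / C2) * exp (C2 * T)"
  have C2: "C2 > 0" using sm Lpos by (simp add: C2_def)
  have M0: "M \<ge> 0" unfolding M_def using C1 k1 g0 a1_def by simp
  have K0: "K \<ge> 0" unfolding K_def using M0 sm g0 Lpos by simp
  have key: "norm (X s t - Y t) \<le> sqrt s * D"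
    if s: "0 < s" "s < 1" and t: "0 \<le> t" "t \<le> T" for s t
  proof -
    have ss: "sqrt s \<le> 1" "sqrt s \<ge> 0" "sqrt s > 0" using s by auto
    have k2: "sqrt s * K \<ge> 0" using ss K0 by simp
    have "norm ((\<lambda>t. (X s t - Y t, V s t - W t)) t) <
        (sqrt s * (2 * g0 + 1) + (sqrt s * K)/C2) * exp (C2 * t) - (sqrt s * K)/C2"
    proof (rule gronwall_strict[OF C2 k2, where T=T and Z'="\<lambda>t. (V s t - W t, A s t - B t)"])
      fix t :: real assume t: "0 \<le> t" "t \<le> T"
      show "((\<lambda>t. (X s t - Y t, V s t - W t)) has_vector_derivative (V s t - W t, A s t - B t)) (at t within {0..})"
        using HR_pos[OF s(1) t(1)] LR[OF t(1)] by (auto intro!: derivative_eq_intros)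
      have hA: "A s t + ((2 * sm) *\<^sub>R V s t + (\<beta> * sqrt s) *\<^sub>R (H (X s t) *v V s t)
             + (1 + sm * sqrt s) *\<^sub>R G (X s t)) = 0"
        using HR_pos[OF s(1) t(1)] sqs[of s] unfolding sm_def by (simp add: add.assoc)
      have hB: "B t + ((2 * sm) *\<^sub>R W t + G (Y t)) = 0"
        using LR[OF t(1)] unfolding sm_def by (simp add: add.assoc)
      have eq: "A s t - B t = - ((2 * sm) *\<^sub>R (V s t - W t) + (G (X s t) - G (Y t))
           + (\<beta> * sqrt s) *\<^sub>R (H (X s t) *v V s t) + (sm * sqrt s) *\<^sub>R G (X s t))"
      proof -
        have a: "A s t = - ((2 * sm) *\<^sub>R V s t + (\<beta> * sqrt s) *\<^sub>R (H (X s t) *v V s t)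
             + (1 + sm * sqrt s) *\<^sub>R G (X s t))" using hA by (metis add_diff_cancel_right' diff_0)
        have b: "B t = - ((2 * sm) *\<^sub>R W t + G (Y t))" using hB by (metis add_diff_cancel_right' diff_0)
        show ?thesis unfolding a b by (simp add: algebra_simps scaleR_diff_right)
      qed
      have bX: "norm (X s t - x0) \<le> M" "norm (V s t) \<le> M" using bndX[OF s t] by auto
      have n1: "norm ((\<beta> * sqrt s) *\<^sub>R (H (X s t) *v V s t)) \<le> sqrt s * (L * M)"
      proof -
        have "norm ((\<beta> * sqrt s) *\<^sub>R (H (X s t) *v V s t)) = (\<beta> * sqrt s) * norm (H (X s t) *v V s t)"
          using assms(2) ss by simp
        also have "\<dots> \<le> (1 * sqrt s) * (L * M)"
          using assms(2,3) ss hb[of "X s t" "V s t"] bX Lpos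
          by (intro mult_mono) (auto intro: order_trans)
        finally show ?thesis by simp
      qed
      have n2: "norm ((sm * sqrt s) *\<^sub>R G (X s t)) \<le> sqrt s * (sm * (g0 + L * M))"
      proof -
        have "norm ((sm * sqrt s) *\<^sub>R G (X s t)) = (sm * sqrt s) * norm (G (X s t))"
          using sm ss by simp
        also have "\<dots> \<le> (sm * sqrt s) * (g0 + L * M)"
          using sm ss GX[of "X s t"] bX Lpos
          by (intro mult_left_mono) (auto intro: order_trans mult_left_mono)
        finally show ?thesis by (simp add: algebra_simps)
      qed
      have n0: "norm ((2 * sm) *\<^sub>R (V s t - W t)) = 2 * sm * norm (V s t - W t)" using sm by simp
      have n3: "norm (G (X s t) - G (Y t)) \<le> L * norm (X s t - Y t)" by (rule lipG)
      have nA: "norm (A s t - B t) \<le> 2 * sm * norm (V s t - W t) + L * norm (X s t - Y t) + sqrt s * K"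
        unfolding eq norm_minus_cancel K_def
        using n0 n1 n2 n3 norm_triangle_ineq[of "(2 * sm) *\<^sub>R (V s t - W t) + (G (X s t) - G (Y t))
           + (\<beta> * sqrt s) *\<^sub>R (H (X s t) *v V s t)" "(sm * sqrt s) *\<^sub>R G (X s t)"]
          norm_triangle_ineq[of "(2 * sm) *\<^sub>R (V s t - W t) + (G (X s t) - G (Y t))" "(\<beta> * sqrt s) *\<^sub>R (H (X s t) *v V s t)"]
          norm_triangle_ineq[of "(2 * sm) *\<^sub>R (V s t - W t)" "G (X s t) - G (Y t)"]
        by (simp add: algebra_simps)
      define z where "z = norm (X s t - Y t, V s t - W t)"
      have z1: "norm (X s t - Y t) \<le> z" "norm (V s t - W t) \<le> z" unfolding z_def by (rule norm_fst_le, rule norm_snd_le)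
      have "norm (V s t - W t, A s t - B t) \<le> norm (V s t - W t) + norm (A s t - B t)" by (rule norm_Pair_le)
      also have "\<dots> \<le> z + (2 * sm * z + L * z + sqrt s * K)"
        using z1 sm Lpos s by (intro add_mono order_trans[OF nA] add_mono mult_left_mono mult_right_mono) auto
      also have "\<dots> = C2 * z + sqrt s * K" by (simp add: C2_def algebra_simps)
      finally show "norm (V s t - W t, A s t - B t) \<le> C2 * norm (X s t - Y t, V s t - W t) + sqrt s * K" unfolding z_def .
    next
      have "norm ((\<lambda>t. (X s t - Y t, V s t - W t)) 0) = norm (V s 0)"
        using HR_init[OF s(1)] LR_init by (simp add: norm_Pair)
      also have "\<dots> \<le> 2 * sqrt s * g0" by (rule V0[OF s(1)])
      also have "\<dots> < sqrt s * (2 * g0 + 1)" using ss by (simp add: algebra_simps)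
      finally show "norm ((\<lambda>t. (X s t - Y t, V s t - W t)) 0) < sqrt s * (2 * g0 + 1)" .
    qed (use t in auto)
    also have "\<dots> \<le> (sqrt s * (2 * g0 + 1) + (sqrt s * K)/C2) * exp (C2 * T)"
    proof -
      have "exp (C2 * t) \<le> exp (C2 * T)" using C2 t by simp
      hence "(sqrt s * (2 * g0 + 1) + (sqrt s * K)/C2) * exp (C2 * t) \<le> (sqrt s * (2 * g0 + 1) + (sqrt s * K)/C2) * exp (C2 * T)"
        using ss g0 K0 C2 by (intro mult_left_mono) auto
      moreover have "(sqrt s * K)/C2 \<ge> 0" using k2 C2 by simp
      ultimately show ?thesis by linarith
    qed
    also have "\<dots> = sqrt s * D" unfolding D_def by (simp add: algebra_simps)
    finally have "norm (X s t - Y t, V s t - W t) < sqrt s * D" by simp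
    thus ?thesis using norm_fst_le[of "X s t - Y t" "V s t - W t"] by linarith
  qed
  have ev1: "eventually (\<lambda>s. 0 \<le> (SUP t\<in>{0..T}. norm (X s t - Y t)) \<and>
                (SUP t\<in>{0..T}. norm (X s t - Y t)) \<le> sqrt s * D) (at_right 0)"
    using eventually_at_right_real[of 0 1, OF zero_less_one]
  proof (rule eventually_mono)
    fix s :: real assume "s \<in> {0<..<1}"
    hence s: "0 < s" "s < 1" by auto
    have ub: "\<And>t. t \<in> {0..T} \<Longrightarrow> norm (X s t - Y t) \<le> sqrt s * D" using key[OF s] by auto
    have bdd: "bdd_above ((\<lambda>t. norm (X s t - Y t)) ` {0..T})" using ub by (intro bdd_aboveI2) 
    have ne: "{0..T} \<noteq> {}" using assms by auto
    show "0 \<le> (SUP t\<in>{0..T}. norm (X s t - Y t)) \<and> (SUP t\<in>{0..T}. norm (X s t - Y t)) \<le> sqrt s * D"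
    proof
      show "0 \<le> (SUP t\<in>{0..T}. norm (X s t - Y t))"
        using assms by (intro cSUP_upper2[OF bdd, of 0]) auto
      show "(SUP t\<in>{0..T}. norm (X s t - Y t)) \<le> sqrt s * D"
        using ne ub by (rule cSUP_least)
    qed
  qed
  have lim: "((\<lambda>s. sqrt s * D) \<longlongrightarrow> 0) (at_right 0)"
  proof -
    have "((\<lambda>s. sqrt s * D) \<longlongrightarrow> sqrt 0 * D) (at_right 0)"
      by (intro tendsto_intros tendsto_ident_at)
    thus ?thesis by simp
  qed
  show ?thesis
    by (rule tendsto_sandwich[OF eventually_mono[OF ev1] eventually_mono[OF ev1] tendsto_const lim]) auto
qed
end
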